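(* For every hypergraph $H$ with $n\ge1$ vertices, $\mathrm{ch}_{cf}(H)\le\chi_{cf}(H)\cdot\ln n+1$.
   Context: A coloring $C\colon V\to\mathbb Z_{>0}$ of a hypergraph $H=(V,\mathcal E)$ (nonempty hyperedges) is conflict-free if every hyperedge contains a vertex whose color appears exactly once in it. $\chi_{cf}(H)$ is the minimum number of colors in a conflict-free coloring of $H$. $\mathrm{ch}_{cf}(H)$ is the minimum $k$ such that for every family $\{L_v\}_{v\in V}$ of sets of positive integers with $|L_v|\ge k$ there is a conflict-free coloring $C$ with $C(v)\in L_v$ for all $v$. *)

theory Defs
  imports Complex_Main
begin

definition hypergraph :: "'a set \<Rightarrow> 'a set set \<Rightarrow> bool" where
  "hypergraph V E \<longleftrightarrow> (\<forall>e\<in>E. e \<noteq> {} \<and> e \<subseteq> V)"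

definition conflict_free :: "'a set set \<Rightarrow> ('a \<Rightarrow> nat) \<Rightarrow> bool" where
  "conflict_free E C \<longleftrightarrow> (\<forall>e\<in>E. \<exists>v\<in>e. \<forall>u\<in>e. C u = C v \<longrightarrow> u = v)"

definition chi_cf :: "'a set \<Rightarrow> 'a set set \<Rightarrow> nat" where
  "chi_cf V E = (LEAST k. \<exists>C. (\<forall>v\<in>V. C v > 0) \<and> card (C ` V) = k \<and> conflict_free E C)"

definition ch_cf :: "'a set \<Rightarrow> 'a set set \<Rightarrow> nat" where
  "ch_cf V E = (LEAST k. \<forall>L :: 'a \<Rightarrow> nat set.
      (\<forall>v\<in>V. L v \<subseteq> {0<..} \<and> (infinite (L v) \<or> card (L v) \<ge> k)) \<longrightarrow>
      (\<exists>C. (\<forall>v\<in>V. C v \<in> L v) \<and> conflict_free E C))"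

end

theory Submission
  imports Defs "HOL-Library.FuncSet"
begin

lemma numeric_bound:
  fixes k n :: nat
  assumes k: "k \<ge> 1" and n: "n \<ge> 1"
  defines "m \<equiv> nat \<lfloor>real k * ln (real n)\<rfloor> + 1"
  shows "n * (k - 1) ^ m < k ^ m"
proof -
  have lnn: "ln (real n) \<ge> 0" using n by simp
  have mgt: "real m > real k * ln (real n)"
    unfolding m_def using lnn k by (simp add: of_nat_nat) linarith
  have kpos: "real k > 0" using k by simp
  have q0: "0 \<le> 1 - 1 / real k" using k by (simp add: field_simps)
  have q1: "1 - 1 / real k \<le> exp (- (1 / real k))"
    using exp_ge_add_one_self[of "- (1 / real k)"] by simp
  have "(1 - 1 / real k) ^ m \<le> exp (- (1 / real k)) ^ m"
    by (intro power_mono q1 q0)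
  also have "\<dots> = exp (real m * (- (1 / real k)))"
    by (rule exp_of_nat_mult[symmetric])
  also have "\<dots> < exp (- ln (real n))"
  proof -
    have "real m / real k > ln (real n)" using mgt kpos by (simp add: field_simps)
    then show ?thesis by simp
  qed
  also have "\<dots> = 1 / real n" using n by (simp add: exp_minus inverse_eq_divide)
  finally have *: "(1 - 1 / real k) ^ m < 1 / real n" .
  have "1 - 1 / real k = real (k - 1) / real k" using k by (simp add: field_simps of_nat_diff)
  then have "(real (k - 1) / real k) ^ m < 1 / real n" using * by simp
  then have "real (k - 1) ^ m / real k ^ m < 1 / real n" by (simp add: power_divide)
  then have "real n * real (k - 1) ^ m < real k ^ m"
    using n kpos by (simp add: field_simps)
  then have "real (n * (k - 1) ^ m) < real (k ^ m)" by simp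
  then show ?thesis by linarith
qed

lemma choose_map:
  fixes V :: "'a set" and K :: "'b set" and S :: "'b set"
  assumes fV: "finite V" and fK: "finite K" and fS: "finite S"
    and cK: "\<And>v. v \<in> V \<Longrightarrow> c v \<in> K"
    and LS: "\<And>v. v \<in> V \<Longrightarrow> L v \<subseteq> S"
    and Lc: "\<And>v. v \<in> V \<Longrightarrow> card (L v) = m"
    and ineq: "card V * (card K - 1) ^ m < card K ^ m" and Vne: "V \<noteq> {}"
  shows "\<exists>f. \<forall>v\<in>V. \<exists>x\<in>L v. f x = c v"
proof -
  define k where "k = card K"
  define s where "s = card S"
  define Bad where "Bad v = PiE S (\<lambda>x. if x \<in> L v then K - {c v} else K)" for v
  have cardBad: "card (Bad v) = (k - 1) ^ m * k ^ (s - m)" if v: "v \<in> V" for v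
  proof -
    have fL: "finite (L v)" using LS[OF v] fS finite_subset by blast
    have "card (Bad v) = (\<Prod>x\<in>S. card (if x \<in> L v then K - {c v} else K))"
      unfolding Bad_def using fS by (simp add: card_PiE)
    also have "\<dots> = (\<Prod>x\<in>S. if x \<in> L v then card (K - {c v}) else card K)"
      by (rule prod.cong) auto
    also have "\<dots> = (\<Prod>x\<in>S \<inter> {x. x \<in> L v}. card (K - {c v})) * (\<Prod>x\<in>S \<inter> - {x. x \<in> L v}. card K)"
      using fS by (rule prod.If_cases)
    finally have 1: "card (Bad v) = (\<Prod>x\<in>S \<inter> {x. x \<in> L v}. card (K - {c v})) * (\<Prod>x\<in>S \<inter> - {x. x \<in> L v}. card K)" .
    have 2: "S \<inter> {x. x \<in> L v} = L v" using LS[OF v] by auto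
    have 3: "S \<inter> - {x. x \<in> L v} = S - L v" by auto
    have 4: "card (S - L v) = s - m" unfolding s_def
      using LS[OF v] fL Lc[OF v] by (simp add: card_Diff_subset)
    have 5: "card (K - {c v}) = k - 1" unfolding k_def using cK[OF v] fK by simp
    show ?thesis using Lc[OF v] unfolding 1 2 3 by (simp add: 4 5 k_def)
  qed
  have msle: "m \<le> s" if "v \<in> V" for v
    using Lc[OF that] LS[OF that] fS unfolding s_def by (metis card_mono)
  have "card (\<Union>v\<in>V. Bad v) \<le> (\<Sum>v\<in>V. card (Bad v))" using fV by (rule card_UN_le)
  also have "\<dots> = card V * ((k - 1) ^ m * k ^ (s - m))" using cardBad by simp
  also have "\<dots> < k ^ s"
  proof (cases "V = {}")
    case True
    then show ?thesis using Vne by simp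
  next
    case False
    then obtain v where "v \<in> V" by blast
    then have ms: "m \<le> s" by (rule msle)
    have kpos: "k > 0"
      using \<open>v \<in> V\<close> cK fK unfolding k_def by (simp add: card_gt_0_iff) blast
    have "card V * ((k - 1) ^ m * k ^ (s - m)) = (card V * (k - 1) ^ m) * k ^ (s - m)"
      by simp
    also have "\<dots> < k ^ m * k ^ (s - m)"
      using ineq kpos unfolding k_def by simp
    also have "\<dots> = k ^ s" using ms by (simp add: power_add[symmetric])
    finally show ?thesis .
  qed
  also have "\<dots> = card (PiE S (\<lambda>_. K))" using fS by (simp add: card_PiE k_def s_def)
  finally have "card (\<Union>v\<in>V. Bad v) < card (PiE S (\<lambda>_. K))" .
  moreover have "finite (\<Union>v\<in>V. Bad v)"
    using fV fS fK unfolding Bad_def by (intro finite_UN_I finite_PiE) auto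
  ultimately have "\<not> PiE S (\<lambda>_. K) \<subseteq> (\<Union>v\<in>V. Bad v)"
    using card_mono[of "\<Union>v\<in>V. Bad v" "PiE S (\<lambda>_. K)"] by linarith
  then obtain f where f: "f \<in> PiE S (\<lambda>_. K)" "f \<notin> (\<Union>v\<in>V. Bad v)" by blast
  have "\<exists>x\<in>L v. f x = c v" if v: "v \<in> V" for v
  proof (rule ccontr)
    assume "\<not> ?thesis"
    then have "f \<in> Bad v" unfolding Bad_def using f(1) LS[OF v]
      by (auto simp: PiE_iff)
    then show False using f(2) v by blast
  qed
  then show ?thesis by blast
qed

theorem corollary6p3:
  fixes V :: "'a set" and E :: "'a set set"
  assumes "hypergraph V E" and "finite V" and "card V \<ge> 1"
  shows "real (ch_cf V E) \<le> real (chi_cf V E) * ln (real (card V)) + 1"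
proof -
  obtain h where h: "bij_betw h V {0..<card V}" using ex_bij_betw_finite_nat[OF assms(2)] by blast
  define C0 where "C0 v = Suc (h v)" for v
  have "inj_on C0 V" unfolding C0_def inj_on_def using h by (simp add: bij_betw_def inj_on_def)
  have ex: "\<exists>C. (\<forall>v\<in>V. C v > 0) \<and> card (C ` V) = card (C0 ` V) \<and> conflict_free E C"
  proof (intro exI conjI)
    show "\<forall>v\<in>V. C0 v > 0" by (simp add: C0_def)
    show "conflict_free E C0" unfolding conflict_free_def
    proof
      fix e assume "e \<in> E"
      then have "e \<noteq> {}" "e \<subseteq> V" using assms(1) unfolding hypergraph_def by auto
      then obtain v where "v \<in> e" by blast
      then show "\<exists>v\<in>e. \<forall>u\<in>e. C0 u = C0 v \<longrightarrow> u = v"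
        using \<open>inj_on C0 V\<close> \<open>e \<subseteq> V\<close> by (meson inj_onD subsetD)
    qed
  qed simp
  have "\<exists>C. (\<forall>v\<in>V. C v > 0) \<and> card (C ` V) = chi_cf V E \<and> conflict_free E C"
    unfolding chi_cf_def by (rule LeastI_ex) (use ex in blast)
  then obtain C where C: "card (C ` V) = chi_cf V E" "conflict_free E C" by blast
  define k where "k = chi_cf V E"
  define n where "n = card V"
  define m where "m = nat \<lfloor>real k * ln (real n)\<rfloor> + 1"
  have Vne: "V \<noteq> {}" using assms(3) by auto
  have k1: "k \<ge> 1" unfolding k_def C(1)[symmetric] using assms(2) Vne
    by (simp add: Suc_le_eq card_gt_0_iff)
  have n1: "n \<ge> 1" using assms(3) n_def by simp
  have ineq: "card V * (card (C ` V) - 1) ^ m < card (C ` V) ^ m"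
    using numeric_bound[OF k1 n1] unfolding m_def n_def k_def C(1) .
  have "ch_cf V E \<le> m"
    unfolding ch_cf_def
  proof (rule Least_le, intro allI impI)
    fix L :: "'a \<Rightarrow> nat set"
    assume L: "\<forall>v\<in>V. L v \<subseteq> {0<..} \<and> (infinite (L v) \<or> m \<le> card (L v))"
    have "\<exists>T. T \<subseteq> L v \<and> card T = m \<and> finite T" if "v \<in> V" for v
    proof (cases "finite (L v)")
      case True
      then have "m \<le> card (L v)" using L that by blast
      then obtain T where "T \<subseteq> L v" "card T = m" "finite T" by (rule obtain_subset_with_card_n)
      then show ?thesis by blast
    next
      case False
      then show ?thesis using infinite_arbitrarily_large by blast
    qed
    then have ex: "\<forall>v\<in>V. \<exists>T. T \<subseteq> L v \<and> card T = m \<and> finite T" by blast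
    obtain L' where L'0: "\<forall>v\<in>V. L' v \<subseteq> L v \<and> card (L' v) = m \<and> finite (L' v)"
      using bchoice[OF ex] by blast
    then have L': "\<And>v. v \<in> V \<Longrightarrow> L' v \<subseteq> L v \<and> card (L' v) = m \<and> finite (L' v)" by blast
    define S where "S = (\<Union>v\<in>V. L' v)"
    have fS: "finite S" unfolding S_def using assms(2) L' by blast
    have "\<exists>f. \<forall>v\<in>V. \<exists>x\<in>L' v. f x = C v"
    proof (rule choose_map[OF assms(2) _ fS, where K="C ` V"])
      show "finite (C ` V)" using assms(2) by blast
      show "C v \<in> C ` V" if "v \<in> V" for v using that by blast
      show "L' v \<subseteq> S" if "v \<in> V" for v using that unfolding S_def by blast
      show "card (L' v) = m" if "v \<in> V" for v using that L' by blast
      show "card V * (card (C ` V) - 1) ^ m < card (C ` V) ^ m" by (rule ineq)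
      show "V \<noteq> {}" by (rule Vne)
    qed
    then obtain f where f: "\<forall>v\<in>V. \<exists>x\<in>L' v. f x = C v" by blast
    define D where "D v = (SOME x. x \<in> L' v \<and> f x = C v)" for v
    have D: "D v \<in> L' v \<and> f (D v) = C v" if "v \<in> V" for v
    proof -
      have "\<exists>x. x \<in> L' v \<and> f x = C v" using f that by blast
      then show ?thesis unfolding D_def by (rule someI_ex)
    qed
    show "\<exists>C. (\<forall>v\<in>V. C v \<in> L v) \<and> conflict_free E C"
    proof (intro exI conjI)
      show "\<forall>v\<in>V. D v \<in> L v" using D L' by blast
      show "conflict_free E D" unfolding conflict_free_def
      proof
        fix e assume e: "e \<in> E"
        then have eV: "e \<subseteq> V" using assms(1) unfolding hypergraph_def by auto
        obtain v where v: "v \<in> e" "\<forall>u\<in>e. C u = C v \<longrightarrow> u = v"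
          using C(2) e unfolding conflict_free_def by blast
        show "\<exists>v\<in>e. \<forall>u\<in>e. D u = D v \<longrightarrow> u = v"
        proof (rule bexI[OF _ v(1)], intro ballI impI)
          fix u assume u: "u \<in> e" "D u = D v"
          then have "C u = C v" using D eV v(1) by (metis subsetD)
          then show "u = v" using v u by blast
        qed
      qed
    qed
  qed
  moreover have "real m \<le> real k * ln (real n) + 1"
  proof -
    have "ln (real n) \<ge> 0" using n1 by simp
    then have "real k * ln (real n) \<ge> 0" by simp
    then show ?thesis unfolding m_def by (simp add: of_nat_nat)
  qed
  ultimately show ?thesis unfolding k_def n_def by linarith
qed

end
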